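(* Let $K$ and $L$ be $n$-element finite sets, $M=K\times L$, and let $u=(u_{kl})$ be a unitary matrix indexed by $K\times L$ all of whose entries are nonzero. Let $G$ be a symmetry group of $u$ with associated representations $S$ on $F(K)$ and $R$ on $F(M)$ (as defined in the context). Then for every $g\in G$ and $f\in F(M)$, $$C_u(R_gf)=S_g\,(C_uf)\,S_g^*\quad\text{and}\quad D_u(R_gf)=S_g\,(D_uf)\,S_g^*.$$
   Context: For a finite set $J$, $F(J)$ denotes the space of complex-valued functions on $J$, with standard Hermitian product $\sum_j\varphi_j\bar\psi_j$. For $f=(f_{kl})\in F(M)$, $C_uf$ and $D_uf$ are the operators on $F(K)$ with matrices $x_{kk'}=\sum_{l\in L}u_{kl}f_{kl}\bar u_{k'l}$ and $y_{kk'}=\sum_{l\in L}u_{kl}f_{k'l}\bar u_{k'l}$ respectively. Let $\mathcal U:F(L)\to F(K)$ be $(\mathcal U\psi)_k=\sum_{l}u_{kl}\psi_l$. A group $G$ is called a symmetry group of $u$ if $G$ acts on the left on the sets $K$ and $L$, and there are faithful unitary representations $S$ on $F(K)$ and $T$ on $F(L)$ of the form $(S_g\varphi)_k=a_k(g)\varphi_{g^{-1}k}$, $(T_g\psi)_l=b_l(g)\psi_{g^{-1}l}$, where $|a_k(g)|=|b_l(g)|=1$, such that $S_g\mathcal U=\mathcal U T_g$ for all $g\in G$. The representation $R$ of $G$ on $F(M)$ is $(R_gf)_{kl}=f_{g^{-1}k\,g^{-1}l}$. *)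

theory Defs
  imports "HOL-Analysis.Analysis" "HOL-Algebra.Group_Action"
begin

text \<open>Functions in F(J) are modelled as total functions on the ambient type, only their
values on J matter. Operators on F(K) are represented by their matrices, i.e. functions
'k \<Rightarrow> 'k \<Rightarrow> complex, of which only entries indexed by K \<times> K matter.\<close>

definition unitary_mat :: "'k set \<Rightarrow> 'l set \<Rightarrow> ('k \<Rightarrow> 'l \<Rightarrow> complex) \<Rightarrow> bool" where
  "unitary_mat K L u \<longleftrightarrow>
     (\<forall>k\<in>K. \<forall>k'\<in>K. (\<Sum>l\<in>L. u k l * cnj (u k' l)) = (if k = k' then 1 else 0)) \<and>
     (\<forall>l\<in>L. \<forall>l'\<in>L. (\<Sum>k\<in>K. cnj (u k l) * u k l') = (if l = l' then 1 else 0))"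

definition Cop :: "'l set \<Rightarrow> ('k \<Rightarrow> 'l \<Rightarrow> complex) \<Rightarrow> ('k \<Rightarrow> 'l \<Rightarrow> complex) \<Rightarrow> 'k \<Rightarrow> 'k \<Rightarrow> complex" where
  "Cop L u f k k' = (\<Sum>l\<in>L. u k l * f k l * cnj (u k' l))"

definition Dop :: "'l set \<Rightarrow> ('k \<Rightarrow> 'l \<Rightarrow> complex) \<Rightarrow> ('k \<Rightarrow> 'l \<Rightarrow> complex) \<Rightarrow> 'k \<Rightarrow> 'k \<Rightarrow> complex" where
  "Dop L u f k k' = (\<Sum>l\<in>L. u k l * f k' l * cnj (u k' l))"

definition Uop :: "'l set \<Rightarrow> ('k \<Rightarrow> 'l \<Rightarrow> complex) \<Rightarrow> ('l \<Rightarrow> complex) \<Rightarrow> 'k \<Rightarrow> complex" where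
  "Uop L u \<psi> k = (\<Sum>l\<in>L. u k l * \<psi> l)"

definition wperm :: "('g, 'b) monoid_scheme \<Rightarrow> ('g \<Rightarrow> 'j \<Rightarrow> 'j) \<Rightarrow> ('j \<Rightarrow> 'g \<Rightarrow> complex)
    \<Rightarrow> 'g \<Rightarrow> ('j \<Rightarrow> complex) \<Rightarrow> 'j \<Rightarrow> complex" where
  "wperm G act c g \<phi> j = c j g * \<phi> (act (inv\<^bsub>G\<^esub> g) j)"

definition wperm_mat :: "('g, 'b) monoid_scheme \<Rightarrow> ('g \<Rightarrow> 'j \<Rightarrow> 'j) \<Rightarrow> ('j \<Rightarrow> 'g \<Rightarrow> complex)
    \<Rightarrow> 'g \<Rightarrow> 'j \<Rightarrow> 'j \<Rightarrow> complex" where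
  "wperm_mat G act c g k j = wperm G act c g (\<lambda>i. if i = j then 1 else 0) k"

definition mat_mult :: "'k set \<Rightarrow> ('k \<Rightarrow> 'k \<Rightarrow> complex) \<Rightarrow> ('k \<Rightarrow> 'k \<Rightarrow> complex) \<Rightarrow> 'k \<Rightarrow> 'k \<Rightarrow> complex" where
  "mat_mult K A B k k' = (\<Sum>j\<in>K. A k j * B j k')"

definition mat_adj :: "('k \<Rightarrow> 'k \<Rightarrow> complex) \<Rightarrow> 'k \<Rightarrow> 'k \<Rightarrow> complex" where
  "mat_adj A k k' = cnj (A k' k)"

definition Rop :: "('g, 'b) monoid_scheme \<Rightarrow> ('g \<Rightarrow> 'k \<Rightarrow> 'k) \<Rightarrow> ('g \<Rightarrow> 'l \<Rightarrow> 'l)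
    \<Rightarrow> 'g \<Rightarrow> ('k \<Rightarrow> 'l \<Rightarrow> complex) \<Rightarrow> 'k \<Rightarrow> 'l \<Rightarrow> complex" where
  "Rop G actK actL g f k l = f (actK (inv\<^bsub>G\<^esub> g) k) (actL (inv\<^bsub>G\<^esub> g) l)"

definition wperm_faithful_rep :: "('g, 'b) monoid_scheme \<Rightarrow> 'j set \<Rightarrow> ('g \<Rightarrow> 'j \<Rightarrow> 'j)
    \<Rightarrow> ('j \<Rightarrow> 'g \<Rightarrow> complex) \<Rightarrow> bool" where
  "wperm_faithful_rep G J act c \<longleftrightarrow>
     (\<forall>g\<in>carrier G. \<forall>j\<in>J. cmod (c j g) = 1) \<and>
     (\<forall>\<phi>. \<forall>j\<in>J. wperm G act c \<one>\<^bsub>G\<^esub> \<phi> j = \<phi> j) \<and>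
     (\<forall>g\<in>carrier G. \<forall>h\<in>carrier G. \<forall>\<phi>. \<forall>j\<in>J.
        wperm G act c (g \<otimes>\<^bsub>G\<^esub> h) \<phi> j = wperm G act c g (wperm G act c h \<phi>) j) \<and>
     (\<forall>g\<in>carrier G. \<forall>h\<in>carrier G.
        (\<forall>\<phi>. \<forall>j\<in>J. wperm G act c g \<phi> j = wperm G act c h \<phi> j) \<longrightarrow> g = h)"

definition symmetry_group :: "('g, 'b) monoid_scheme \<Rightarrow> 'k set \<Rightarrow> 'l set \<Rightarrow> ('k \<Rightarrow> 'l \<Rightarrow> complex)
    \<Rightarrow> ('g \<Rightarrow> 'k \<Rightarrow> 'k) \<Rightarrow> ('g \<Rightarrow> 'l \<Rightarrow> 'l) \<Rightarrow> ('k \<Rightarrow> 'g \<Rightarrow> complex) \<Rightarrow> ('l \<Rightarrow> 'g \<Rightarrow> complex) \<Rightarrow> bool" where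
  "symmetry_group G K L u actK actL a b \<longleftrightarrow>
     group G \<and> group_action G K actK \<and> group_action G L actL \<and>
     wperm_faithful_rep G K actK a \<and> wperm_faithful_rep G L actL b \<and>
     (\<forall>g\<in>carrier G. \<forall>\<psi>. \<forall>k\<in>K.
        wperm G actK a g (Uop L u \<psi>) k = Uop L u (wperm G actL b g \<psi>) k)"

end

theory Submission
  imports Defs
begin

theorem proposition3p2:
  fixes K :: "'k set" and L :: "'l set" and n :: nat
    and u :: "'k \<Rightarrow> 'l \<Rightarrow> complex"
    and G :: "('g, 'b) monoid_scheme"
    and actK :: "'g \<Rightarrow> 'k \<Rightarrow> 'k" and actL :: "'g \<Rightarrow> 'l \<Rightarrow> 'l"
    and a :: "'k \<Rightarrow> 'g \<Rightarrow> complex" and b :: "'l \<Rightarrow> 'g \<Rightarrow> complex"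
  assumes "finite K" and "finite L" and "card K = n" and "card L = n"
    and "unitary_mat K L u"
    and "\<forall>k\<in>K. \<forall>l\<in>L. u k l \<noteq> 0"
    and "symmetry_group G K L u actK actL a b"
    and "g \<in> carrier G"
  shows "\<forall>k\<in>K. \<forall>k'\<in>K.
      Cop L u (Rop G actK actL g f) k k' =
        mat_mult K (mat_mult K (wperm_mat G actK a g) (Cop L u f)) (mat_adj (wperm_mat G actK a g)) k k'
    \<and> Dop L u (Rop G actK actL g f) k k' =
        mat_mult K (mat_mult K (wperm_mat G actK a g) (Dop L u f)) (mat_adj (wperm_mat G actK a g)) k k'"
proof -
  note sg = assms(7)[unfolded symmetry_group_def]
  have grp: "group G" and aK: "group_action G K actK" and aL: "group_action G L actL"
    using sg by auto
  have bmod: "\<And>l. l \<in> L \<Longrightarrow> cmod (b l g) = 1"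
    using sg assms(8) unfolding wperm_faithful_rep_def by auto
  have bcnj: "\<And>l. l \<in> L \<Longrightarrow> b l g * cnj (b l g) = 1"
    using bmod by (simp add: complex_norm_square[symmetric])
  define h where "h = inv\<^bsub>G\<^esub> g"
  have hG: "h \<in> carrier G" using grp assms(8) h_def by simp
  have ihh: "inv\<^bsub>G\<^esub> h = g" using grp assms(8) h_def by simp
  have hK: "\<And>k. k \<in> K \<Longrightarrow> actK h k \<in> K"
    using group_action.element_image[OF aK hG] by blast
  have gL: "\<And>l. l \<in> L \<Longrightarrow> actL g l \<in> L"
    using group_action.element_image[OF aL assms(8)] by blast
  have hgL: "\<And>l. l \<in> L \<Longrightarrow> actL h (actL g l) = l"
    using group_action.orbit_sym_aux[OF aL assms(8)] h_def by blast
  have iffL: "\<And>l l0. l \<in> L \<Longrightarrow> l0 \<in> L \<Longrightarrow> (actL h l = l0) \<longleftrightarrow> (l = actL g l0)"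
  proof -
    fix l l0 assume l: "l \<in> L" and l0: "l0 \<in> L"
    show "(actL h l = l0) \<longleftrightarrow> (l = actL g l0)"
    proof
      assume "actL h l = l0"
      then show "l = actL g l0"
        using group_action.orbit_sym_aux[OF aL hG l] ihh by metis
    next
      assume "l = actL g l0" then show "actL h l = l0" using hgL l0 by simp
    qed
  qed
  have bijg: "bij_betw (actL g) L L"
    using group_action.bij_prop0[OF aL assms(8)] by (simp add: Bij_def)
  have key: "\<And>k l0. k \<in> K \<Longrightarrow> l0 \<in> L \<Longrightarrow>
      a k g * u (actK h k) l0 = u k (actL g l0) * b (actL g l0) g"
  proof -
    fix k l0 assume k: "k \<in> K" and l0: "l0 \<in> L"
    define \<psi> where "\<psi> = (\<lambda>l. if l = l0 then (1::complex) else 0)"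
    have e: "wperm G actK a g (Uop L u \<psi>) k = Uop L u (wperm G actL b g \<psi>) k"
      using sg assms(8) k by blast
    have lhs: "wperm G actK a g (Uop L u \<psi>) k = a k g * u (actK h k) l0"
      unfolding wperm_def Uop_def \<psi>_def h_def[symmetric]
      using l0 assms(2) by (simp add: if_distrib sum.delta' cong: if_cong)
    have "Uop L u (wperm G actL b g \<psi>) k = (\<Sum>l\<in>L. if l = actL g l0 then u k l * b l g else 0)"
      unfolding wperm_def Uop_def \<psi>_def h_def[symmetric]
      by (rule sum.cong) (auto simp: iffL l0)
    also have "\<dots> = u k (actL g l0) * b (actL g l0) g"
      using gL[OF l0] assms(2) by (simp add: sum.delta')
    finally show "a k g * u (actK h k) l0 = u k (actL g l0) * b (actL g l0) g"
      using e lhs by simp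
  qed
  have reidx: "\<And>F. (\<Sum>l\<in>L. F l) = (\<Sum>l0\<in>L. F (actL g l0))"
    using sum.reindex_bij_betw[OF bijg] by metis
  have SXS: "\<And>X k k'. k \<in> K \<Longrightarrow> k' \<in> K \<Longrightarrow>
      mat_mult K (mat_mult K (wperm_mat G actK a g) X) (mat_adj (wperm_mat G actK a g)) k k'
       = a k g * X (actK h k) (actK h k') * cnj (a k' g)"
  proof -
    fix X k k' assume k: "k \<in> K" and k': "k' \<in> K"
    have inner: "\<And>j. mat_mult K (wperm_mat G actK a g) X k j = a k g * X (actK h k) j"
    proof -
      fix j
      have "mat_mult K (wperm_mat G actK a g) X k j = (\<Sum>i\<in>K. if actK h k = i then a k g * X i j else 0)"
        unfolding mat_mult_def wperm_mat_def wperm_def h_def[symmetric] by (rule sum.cong) auto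
      then show "mat_mult K (wperm_mat G actK a g) X k j = a k g * X (actK h k) j"
        using hK[OF k] assms(1) by (simp add: sum.delta)
    qed
    show "mat_mult K (mat_mult K (wperm_mat G actK a g) X) (mat_adj (wperm_mat G actK a g)) k k'
       = a k g * X (actK h k) (actK h k') * cnj (a k' g)"
      unfolding mat_mult_def[of K "mat_mult K _ _"] inner mat_adj_def wperm_mat_def wperm_def h_def[symmetric]
      using hK[OF k'] assms(1)
      by (subst sum.cong[OF refl, where h="\<lambda>i. if actK h k' = i then a k g * X (actK h k) i * cnj (a k' g) else 0"]) (auto simp: sum.delta)
  qed
  have main: "\<And>k k' F. k \<in> K \<Longrightarrow> k' \<in> K \<Longrightarrow>
     (\<Sum>l\<in>L. u k l * F (actL h l) * cnj (u k' l))
       = a k g * (\<Sum>l\<in>L. u (actK h k) l * F l * cnj (u (actK h k') l)) * cnj (a k' g)"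
  proof -
    fix k k' F assume k: "k \<in> K" and k': "k' \<in> K"
    have "(\<Sum>l\<in>L. u k l * F (actL h l) * cnj (u k' l))
        = (\<Sum>l0\<in>L. u k (actL g l0) * F l0 * cnj (u k' (actL g l0)))"
      by (subst reidx) (auto intro!: sum.cong simp: hgL)
    also have "\<dots> = (\<Sum>l0\<in>L. a k g * u (actK h k) l0 * F l0 * cnj (a k' g * u (actK h k') l0))"
    proof (rule sum.cong[OF refl])
      fix l0 assume l0: "l0 \<in> L"
      have "a k g * u (actK h k) l0 * F l0 * cnj (a k' g * u (actK h k') l0)
          = (u k (actL g l0) * b (actL g l0) g) * F l0 * cnj (u k' (actL g l0) * b (actL g l0) g)"
        using key[OF k l0] key[OF k' l0] by simp
      also have "\<dots> = u k (actL g l0) * F l0 * cnj (u k' (actL g l0)) * (b (actL g l0) g * cnj (b (actL g l0) g))"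
        by (simp add: algebra_simps)
      also have "\<dots> = u k (actL g l0) * F l0 * cnj (u k' (actL g l0))"
        using bcnj[OF gL[OF l0]] by simp
      finally show "u k (actL g l0) * F l0 * cnj (u k' (actL g l0)) =
          a k g * u (actK h k) l0 * F l0 * cnj (a k' g * u (actK h k') l0)" by (rule sym)
    qed
    also have "\<dots> = a k g * (\<Sum>l\<in>L. u (actK h k) l * F l * cnj (u (actK h k') l)) * cnj (a k' g)"
      by (simp add: sum_distrib_left sum_distrib_right algebra_simps)
    finally show "(\<Sum>l\<in>L. u k l * F (actL h l) * cnj (u k' l))
       = a k g * (\<Sum>l\<in>L. u (actK h k) l * F l * cnj (u (actK h k') l)) * cnj (a k' g)" .
  qed
  show ?thesis
  proof (intro ballI conjI)
    fix k k' assume k: "k \<in> K" and k': "k' \<in> K"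
    show "Cop L u (Rop G actK actL g f) k k' =
        mat_mult K (mat_mult K (wperm_mat G actK a g) (Cop L u f)) (mat_adj (wperm_mat G actK a g)) k k'"
      unfolding SXS[OF k k'] Cop_def Rop_def h_def[symmetric]
      using main[OF k k', of "f (actK h k)"] by simp
    show "Dop L u (Rop G actK actL g f) k k' =
        mat_mult K (mat_mult K (wperm_mat G actK a g) (Dop L u f)) (mat_adj (wperm_mat G actK a g)) k k'"
      unfolding SXS[OF k k'] Dop_def Rop_def h_def[symmetric]
      using main[OF k k', of "f (actK h k')"] by simp
  qed
qed

end
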